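(* Let $\mathcal{A}$ be a unital commutative C*-algebra and $d,n\in\mathbb{N}$. Let $\{\tau_j\}_{j=1}^n$ and $\{\omega_j\}_{j=1}^n$ be two Parseval frames for the Hilbert C*-module $\mathcal{A}^d$, and let $\varepsilon>0$. If \[ \left\|\sum_{j=1}^{n}\langle \tau_j-\omega_j, \tau_j-\omega_j\rangle \right\|<\varepsilon, \] then \[ \left\|\sum_{j=1}^{n}\langle \theta_\tau\tau_j-\theta_\omega\omega_j, \theta_\tau\tau_j-\theta_\omega \omega_j\rangle \right\|<4\varepsilon, \] where the inner product on the left is that of $\mathcal{A}^n$.
   Context: For a unital C*-algebra $\mathcal{A}$ and $m\in\mathbb{N}$, $\mathcal{A}^m$ is the left $\mathcal{A}$-module with the natural operations and $\mathcal{A}$-valued inner product $\langle (x_j)_{j=1}^m,(y_j)_{j=1}^m\rangle=\sum_{j=1}^m x_jy_j^*$, with norm $\|x\|=\|\langle x,x\rangle\|^{1/2}$; $\{e_k\}$ denotes its standard orthonormal basis. A collection $\{\tau_j\}_{j=1}^n$ in $\mathcal{A}^d$ is a Parseval frame for $\mathcal{A}^d$ if $\langle x,x\rangle=\sum_{j=1}^n\langle x,\tau_j\rangle\langle\tau_j,x\rangle$ for all $x\in\mathcal{A}^d$. Its analysis homomorphism is $\theta_\tau:\mathcal{A}^d\to\mathcal{A}^n$, $\theta_\tau x=(\langle x,\tau_j\rangle)_{j=1}^n$; similarly for $\theta_\omega$. *)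

theory Defs
  imports "HOL-Analysis.Analysis"
begin

class comm_cstar_algebra_1 = real_normed_algebra_1 + banach + comm_ring_1 +
  fixes cscale :: "complex \<Rightarrow> 'a \<Rightarrow> 'a"
    and cstar :: "'a \<Rightarrow> 'a"
  assumes cscale_of_real: "cscale (complex_of_real r) x = scaleR r x"
    and cscale_add_left: "cscale (a + b) x = cscale a x + cscale b x"
    and cscale_add_right: "cscale a (x + y) = cscale a x + cscale a y"
    and cscale_cscale: "cscale a (cscale b x) = cscale (a * b) x"
    and cscale_one: "cscale 1 x = x"
    and cscale_mult_left: "cscale a (x * y) = cscale a x * y"
    and cscale_mult_right: "cscale a (x * y) = x * cscale a y"
    and norm_cscale: "norm (cscale a x) = cmod a * norm x"
    and cstar_add: "cstar (x + y) = cstar x + cstar y"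
    and cstar_cscale: "cstar (cscale a x) = cscale (cnj a) (cstar x)"
    and cstar_mult: "cstar (x * y) = cstar y * cstar x"
    and cstar_cstar: "cstar (cstar x) = x"
    and cstar_identity: "norm (cstar x * x) = (norm x)\<^sup>2"

text \<open>Elements of A^m are represented by functions nat \<Rightarrow> 'a; only indices < m matter.
The A-valued inner product on A^m: <x,y> = sum_{j<m} x_j y_j^*.\<close>

definition hip :: "nat \<Rightarrow> (nat \<Rightarrow> 'a::comm_cstar_algebra_1) \<Rightarrow> (nat \<Rightarrow> 'a) \<Rightarrow> 'a" where
  "hip m x y = (\<Sum>j<m. x j * cstar (y j))"

definition parseval_frame :: "nat \<Rightarrow> nat \<Rightarrow> (nat \<Rightarrow> nat \<Rightarrow> 'a::comm_cstar_algebra_1) \<Rightarrow> bool" where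
  "parseval_frame d n \<tau> \<longleftrightarrow>
     (\<forall>x. hip d x x = (\<Sum>j<n. hip d x (\<tau> j) * hip d (\<tau> j) x))"

definition analysis_op :: "nat \<Rightarrow> (nat \<Rightarrow> nat \<Rightarrow> 'a::comm_cstar_algebra_1) \<Rightarrow> (nat \<Rightarrow> 'a) \<Rightarrow> nat \<Rightarrow> 'a" where
  "analysis_op d \<tau> x = (\<lambda>j. hip d x (\<tau> j))"

end

theory Submission
  imports Defs "HOL-Computational_Algebra.Formal_Power_Series"
begin



lemma cstar_one[simp]: "cstar 1 = (1::'a::comm_cstar_algebra_1)"
  by (metis cstar_cstar cstar_mult mult_1_right)

lemma cstar_zero[simp]: "cstar 0 = (0::'a::comm_cstar_algebra_1)"
  using cstar_add[of 0 0] by simp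

lemma cstar_uminus[simp]: "cstar (- x) = - cstar (x::'a::comm_cstar_algebra_1)"
  using cstar_add[of x "-x"] by (simp add: eq_neg_iff_add_eq_0 add.commute)

lemma cstar_diff[simp]: "cstar (x - y) = cstar x - cstar (y::'a::comm_cstar_algebra_1)"
  using cstar_add[of x "-y"] by simp

lemma cstar_scaleR[simp]: "cstar (scaleR r x) = scaleR r (cstar (x::'a::comm_cstar_algebra_1))"
  by (metis cstar_cscale cscale_of_real complex_cnj_complex_of_real)

lemma cstar_of_real[simp]: "cstar (of_real r) = (of_real r::'a::comm_cstar_algebra_1)"
  by (simp add: of_real_def del: of_real_1 scaleR_one)

lemma cstar_power[simp]: "cstar (x ^ k) = (cstar (x::'a::comm_cstar_algebra_1)) ^ k"
  by (induct k) (simp_all add: cstar_mult mult.commute)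

lemma cstar_sum: "cstar (sum f S) = sum (\<lambda>i. cstar (f i :: 'a::comm_cstar_algebra_1)) S"
  by (induct S rule: infinite_finite_induct) (simp_all add: cstar_add)

lemma norm_cstar[simp]: "norm (cstar x) = norm (x::'a::comm_cstar_algebra_1)"
proof -
  have le: "norm y \<le> norm (cstar y)" for y
  proof (cases "y = 0")
    case False
    have "(norm y)^2 \<le> norm (cstar y) * norm y"
      using cstar_identity[of y] norm_mult_ineq[of "cstar y" y] by simp
    then show ?thesis using False by (simp add: power2_eq_square mult_le_cancel_right)
  qed simp
  show ?thesis using le[of x] le[of "cstar x"] by (simp add: cstar_cstar)
qed

lemma bounded_linear_cstar: "bounded_linear (cstar :: 'a::comm_cstar_algebra_1 \<Rightarrow> 'a)"
  by (rule bounded_linear_intro[where K=1]) (simp_all add: cstar_add)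

lemma cscale_zero[simp]: "cscale 0 x = (0::'a::comm_cstar_algebra_1)"
  using cscale_of_real[of 0 x] by simp

lemma cscale_uminus: "cscale (- a) x = - cscale a (x::'a::comm_cstar_algebra_1)"
  using cscale_add_left[of "-a" a x] by (simp add: eq_neg_iff_add_eq_0)

lemma cscale_mult_both: "cscale a x * cscale b y = cscale (a*b) (x*(y::'a::comm_cstar_algebra_1))"
  by (metis cscale_cscale cscale_mult_left cscale_mult_right mult.commute)

lemma cscale_minus1: "cscale (-1) x = - (x::'a::comm_cstar_algebra_1)"
  by (simp add: cscale_uminus cscale_one)


lemma gbin_half_bound: "\<bar>(1/2::real) gchoose k\<bar> \<le> 1"
proof (induct k)
  case 0 then show ?case by simp
next
  case (Suc k)
  have e: "(1/2::real) * ((1/2) gchoose k) = of_nat k * ((1/2) gchoose k) + of_nat (Suc k) * ((1/2) gchoose (Suc k))"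
    by (rule gbinomial_mult_1)
  hence "of_nat (Suc k) * ((1/2::real) gchoose (Suc k)) = (1/2 - of_nat k) * ((1/2) gchoose k)"
    by (simp add: algebra_simps)
  hence "real (Suc k) * \<bar>(1/2::real) gchoose (Suc k)\<bar> = \<bar>1/2 - real k\<bar> * \<bar>(1/2) gchoose k\<bar>"
    by (metis abs_mult abs_of_nat)
  also have "\<dots> \<le> real (Suc k) * 1"
    by (rule mult_mono) (use Suc in auto)
  finally show ?case by (simp del: of_nat_Suc)
qed


lemma sqrt_exists:
  fixes u :: "'a::comm_cstar_algebra_1"
  assumes sa: "cstar u = u" and nu: "norm u < 1"
  shows "\<exists>s. cstar s = s \<and> s * s = 1 - u"
proof -
  define a where "a k = ((1/2::real) gchoose k) * (-1)^k" for k
  define f where "f k = a k *\<^sub>R u^k" for k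
  have nf: "norm (f k) \<le> norm u ^ k" for k
  proof -
    have "norm (f k) = \<bar>a k\<bar> * norm (u^k)" by (simp add: f_def)
    also have "\<dots> \<le> 1 * norm u ^ k"
      by (rule mult_mono) (auto simp: a_def abs_mult gbin_half_bound norm_power_ineq)
    finally show ?thesis by simp
  qed
  have sf: "summable (\<lambda>k. norm (f k))"
  proof (rule summable_comparison_test[where g="\<lambda>k. norm u ^ k"])
    show "\<exists>N. \<forall>n\<ge>N. norm (norm (f n)) \<le> norm u ^ n" using nf by simp
    show "summable (\<lambda>k. norm u ^ k)" by (rule summable_geometric) (use nu in simp)
  qed
  have cp: "(\<lambda>k. \<Sum>i\<le>k. f i * f (k-i)) sums (suminf f * suminf f)"
    by (rule Cauchy_product_sums[OF sf sf])
  have trm: "(\<Sum>i\<le>k. f i * f (k-i)) = ((-1)^k * ((1::real) gchoose k)) *\<^sub>R u^k" for k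
  proof -
    have "(\<Sum>i\<le>k. f i * f (k-i)) = (\<Sum>i\<le>k. (a i * a (k-i)) *\<^sub>R u^k)"
    proof (rule sum.cong)
      fix i assume "i \<in> {..k}"
      hence "u^i * u^(k-i) = u^k" by (simp add: power_add[symmetric])
      thus "f i * f (k-i) = (a i * a (k-i)) *\<^sub>R u^k" by (simp add: f_def)
    qed simp
    also have "\<dots> = (\<Sum>i\<le>k. a i * a (k-i)) *\<^sub>R u^k" by (simp add: scaleR_sum_left)
    also have "(\<Sum>i\<le>k. a i * a (k-i)) = (-1)^k * (\<Sum>i\<le>k. ((1/2::real) gchoose i) * ((1/2) gchoose (k-i)))"
    proof -
      have "(\<Sum>i\<le>k. a i * a (k-i)) = (\<Sum>i\<le>k. (-1)^k * (((1/2::real) gchoose i) * ((1/2) gchoose (k-i))))"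
      proof (rule sum.cong)
        fix i assume "i \<in> {..k}"
        hence "(-1::real)^i * (-1)^(k-i) = (-1)^k" by (simp add: power_add[symmetric])
        thus "a i * a (k-i) = (-1)^k * (((1/2::real) gchoose i) * ((1/2) gchoose (k-i)))"
      proof -
          have "a i * a (k-i) = (((1/2::real) gchoose i) * ((1/2) gchoose (k-i))) * ((-1)^i * (-1)^(k-i))"
            unfolding a_def by (simp only: mult_ac)
          also have "\<dots> = (((1/2::real) gchoose i) * ((1/2) gchoose (k-i))) * (-1)^k"
            using \<open>(-1::real)^i * (-1)^(k-i) = (-1)^k\<close> by (simp only:)
          finally show ?thesis by (simp only: mult.commute)
        qed
      qed simp
      thus ?thesis by (simp add: sum_distrib_left)
    qed
    also have "(\<Sum>i\<le>k. ((1/2::real) gchoose i) * ((1/2) gchoose (k-i))) = 1 gchoose k"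
      using gbinomial_Vandermonde[of "1/2::real" "1/2" k] by (simp add: atMost_atLeast0)
    finally show ?thesis .
  qed
  have z: "((-1)^k * ((1::real) gchoose k)) *\<^sub>R u^k = 0" if "k \<notin> {0,1}" for k
  proof -
    have "(1::real) gchoose k = of_nat (1 choose k)" using binomial_gbinomial[of 1 k, where 'a=real] by simp
    also have "(1 choose k) = 0" using that by (simp add: binomial_eq_0)
    finally show ?thesis by simp
  qed
  have "(\<lambda>k. ((-1)^k * ((1::real) gchoose k)) *\<^sub>R u^k) sums (\<Sum>k\<in>{0,1}. ((-1)^k * ((1::real) gchoose k)) *\<^sub>R u^k)"
    by (rule sums_finite) (use z in auto)
  hence "(\<lambda>k. ((-1)^k * ((1::real) gchoose k)) *\<^sub>R u^k) sums (1 - u)" by simp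
  moreover have "(\<lambda>k. ((-1)^k * ((1::real) gchoose k)) *\<^sub>R u^k) sums (suminf f * suminf f)"
    using cp by (simp only: trm)
  ultimately have ss: "suminf f * suminf f = 1 - u"
    by (rule sums_unique2[symmetric])
  have sm: "summable f" by (rule summable_norm_cancel[OF sf])
  have "cstar (suminf f) = (\<Sum>n. cstar (f n))"
    by (rule bounded_linear.suminf[OF bounded_linear_cstar sm])
  also have "(\<lambda>n. cstar (f n)) = f" by (simp add: fun_eq_iff f_def sa)
  finally show ?thesis using ss by blast
qed



lemma cscale_zero_right[simp]: "cscale a 0 = (0::'a::comm_cstar_algebra_1)"
  by (metis cscale_mult_right mult_zero_left)

lemma cscale_minus_right: "cscale a (- y) = - cscale a (y::'a::comm_cstar_algebra_1)"
  using cscale_add_right[of a y "-y"] by (simp add: eq_neg_iff_add_eq_0 add.commute)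

lemma cscale_diff_right: "cscale a (x - y) = cscale a x - cscale a (y::'a::comm_cstar_algebra_1)"
  using cscale_add_right[of a x "-y"] by (simp add: cscale_minus_right)

definition posc :: "'a::comm_cstar_algebra_1 \<Rightarrow> bool" where
  "posc h \<longleftrightarrow> cstar h = h \<and> (\<exists>T. norm (of_real T - h) \<le> T)"

lemma unitary_bound:
  fixes g w :: "'a::comm_cstar_algebra_1"
  assumes sg: "cstar g = g" and sw: "cstar w = w" and e: "g*g + w*w = of_real l" and l: "l > 0"
  shows "norm (g*g) \<le> l"
proof -
  define x where "x = g + cscale \<i> w"
  have cx: "cstar x = g - cscale \<i> w"
    by (simp add: x_def cstar_add cstar_cscale sg sw cscale_uminus)
  have ii: "cscale \<i> w * cscale \<i> w = - (w * w)"
    by (simp add: cscale_mult_both cscale_minus1)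
  have "cstar x * x = g*g + w*w"
    unfolding cx unfolding x_def using ii by (simp add: algebra_simps)
  hence "(norm x)^2 = l" using cstar_identity[of x] e l by simp
  hence nx: "norm x * norm x = l" by (simp add: power2_eq_square)
  have "x + cstar x = 2 *\<^sub>R g" unfolding cx unfolding x_def by (simp add: scaleR_2)
  hence "2 * norm g \<le> norm x + norm x"
    by (metis norm_cstar norm_scaleR norm_triangle_ineq abs_numeral)
  hence ng: "norm g \<le> norm x" by simp
  have "norm (g*g) \<le> norm g * norm g" by (rule norm_mult_ineq)
  also have "\<dots> \<le> norm x * norm x" by (rule mult_mono) (use ng in auto)
  finally show ?thesis using nx by simp
qed

lemma posc_sq:
  fixes a :: "'a::comm_cstar_algebra_1"
  assumes sa: "cstar a = a"
  shows "posc (a*a)"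
proof -
  define T where "T = norm a ^ 2 + 1"
  have T: "T > 0" unfolding T_def by (simp add: add_nonneg_pos)
  define u where "u = (1/T) *\<^sub>R (a*a)"
  have "norm u = norm (a*a) / T" using T by (simp add: u_def)
  also have "\<dots> \<le> norm a ^ 2 / T"
    using T norm_mult_ineq[of a a] by (simp add: divide_right_mono power2_eq_square)
  also have "\<dots> < 1" using T by (simp add: T_def)
  finally have nu: "norm u < 1" .
  have su: "cstar u = u" by (simp add: u_def cstar_mult sa)
  obtain w where sw: "cstar w = w" and ww: "w*w = 1 - u" using sqrt_exists[OF su nu] by blast
  define g where "g = (1 / sqrt T) *\<^sub>R a"
  have sg: "cstar g = g" by (simp add: g_def sa)
  have "g * g = ((1/sqrt T) * (1/sqrt T)) *\<^sub>R (a*a)" by (simp add: g_def)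
  also have "(1/sqrt T) * (1/sqrt T) = 1/T" using T by (simp add: real_sqrt_mult[symmetric])
  finally have gg: "g*g = u" by (simp add: u_def)
  have "norm (w*w) \<le> 1"
    by (rule unitary_bound[OF sw sg, of 1]) (simp_all add: ww gg)
  hence n1: "norm (1 - u) \<le> 1" by (simp add: ww)
  have "of_real T - a*a = T *\<^sub>R (1 - u)"
    using T by (simp add: u_def scaleR_diff_right of_real_def)
  hence "norm (of_real T - a*a) = T * norm (1 - u)" using T by simp
  also have "\<dots> \<le> T" using n1 T by (simp add: mult_le_cancel_left1)
  finally show ?thesis unfolding posc_def using sa by (auto simp: cstar_mult)
qed

lemma posc_zero: "posc (0::'a::comm_cstar_algebra_1)"
  unfolding posc_def by (rule conjI, simp, rule exI[of _ 0], simp)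

lemma posc_add:
  assumes "posc h" "posc (r::'a::comm_cstar_algebra_1)"
  shows "posc (h + r)"
proof -
  obtain T1 T2 where 1: "norm (of_real T1 - h) \<le> T1" and 2: "norm (of_real T2 - r) \<le> T2"
    using assms unfolding posc_def by blast
  have "of_real (T1 + T2) - (h + r) = (of_real T1 - h) + (of_real T2 - r)" by simp
  hence "norm (of_real (T1 + T2) - (h + r)) \<le> norm (of_real T1 - h) + norm (of_real T2 - r)"
    by (simp only: norm_triangle_ineq)
  hence "norm (of_real (T1 + T2) - (h + r)) \<le> T1 + T2" using 1 2 by linarith
  thus ?thesis using assms unfolding posc_def by (auto simp: cstar_add intro!: exI[of _ "T1+T2"])
qed

lemma posc_scale:
  assumes "posc h" "r > 0"
  shows "posc (r *\<^sub>R (h::'a::comm_cstar_algebra_1))"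
proof -
  obtain T where 1: "norm (of_real T - h) \<le> T" using assms unfolding posc_def by blast
  have "of_real (r*T) - r *\<^sub>R h = r *\<^sub>R (of_real T - h)" by (simp add: scaleR_diff_right of_real_def)
  hence n: "norm (of_real (r*T) - r *\<^sub>R h) \<le> r * T" using 1 assms(2) by (simp only: norm_scaleR) simp
  show ?thesis unfolding posc_def
  proof (intro conjI exI)
    show "cstar (r *\<^sub>R h) = r *\<^sub>R h" using assms(1) by (simp add: posc_def)
    show "norm (of_real (r*T) - r *\<^sub>R h) \<le> r * T" by (rule n)
  qed
qed

lemma posc_sum: "(\<And>i. i \<in> S \<Longrightarrow> posc (f i)) \<Longrightarrow> posc (sum f S :: 'a::comm_cstar_algebra_1)"
  by (induct S rule: infinite_finite_induct) (auto intro: posc_zero posc_add)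

lemma posc_xx: "posc (x * cstar (x::'a::comm_cstar_algebra_1))"
proof -
  define a where "a = x + cstar x"
  define b where "b = cscale \<i> (x - cstar x)"
  have sa: "cstar a = a" by (simp add: a_def cstar_add cstar_cstar add.commute)
  have sb: "cstar b = b"
    by (simp add: b_def cstar_cscale cstar_cstar cscale_uminus cscale_diff_right)
  have bb: "b * b = - ((x - cstar x) * (x - cstar x))"
    by (simp add: b_def cscale_mult_both cscale_minus1)
  have "a*a + b*b = x * cstar x + x * cstar x + x * cstar x + x * cstar x"
    unfolding bb a_def by (simp add: algebra_simps)
  also have "\<dots> = (1+1+1+1::real) *\<^sub>R (x * cstar x)"
    by (simp only: scaleR_left_distrib scaleR_one)
  also have "(1+1+1+1::real) = 4" by simp
  finally have e: "a*a + b*b = (4::real) *\<^sub>R (x * cstar x)" .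
  have "posc ((1/4::real) *\<^sub>R (a*a + b*b))"
    by (rule posc_scale[OF posc_add[OF posc_sq[OF sa] posc_sq[OF sb]]]) simp
  thus ?thesis unfolding e by simp
qed

lemma posc_const:
  assumes "cstar k = k" "norm k \<le> c"
  shows "posc (of_real c - (k::'a::comm_cstar_algebra_1))"
  unfolding posc_def using assms by (auto intro!: exI[of _ c])

lemma sqrt_pos:
  assumes "posc h" "d > 0"
  shows "\<exists>g. cstar g = g \<and> g * g = h + of_real d"
proof -
  obtain T where 1: "norm (of_real T - h) \<le> T" and sh: "cstar h = h"
    using assms unfolding posc_def by blast
  have T0: "T \<ge> 0" using 1 norm_ge_zero order_trans by blast
  define T' where "T' = T + d"
  have T': "T' > 0" using T0 assms by (simp add: T'_def)
  define u where "u = (1/T') *\<^sub>R (of_real T - h)"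
  have "norm u = norm (of_real T - h) / T'" using T' by (simp add: u_def)
  also have "\<dots> \<le> T / T'" using 1 T' by (simp add: divide_right_mono)
  also have "\<dots> < 1" using T' assms by (simp add: T'_def)
  finally have nu: "norm u < 1" .
  have su: "cstar u = u" by (simp add: u_def sh)
  obtain q where ss: "cstar q = q" and s2: "q * q = 1 - u" using sqrt_exists[OF su nu] by blast
  define g where "g = sqrt T' *\<^sub>R q"
  have "g * g = (sqrt T' * sqrt T') *\<^sub>R (q*q)" by (simp add: g_def)
  also have "\<dots> = T' *\<^sub>R (1 - u)" using T' by (simp add: s2)
  also have "\<dots> = of_real T' - (of_real T - h)"
    using T' by (simp add: u_def scaleR_diff_right of_real_def)
  also have "\<dots> = h + of_real d" by (simp add: T'_def)
  finally have "g * g = h + of_real d" .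
  moreover have "cstar g = g" by (simp add: g_def ss)
  ultimately show ?thesis by blast
qed

lemma posc_le:
  assumes ph: "posc h" and pc: "posc (of_real c - h)" and c: "c \<ge> 0"
  shows "norm (h::'a::comm_cstar_algebra_1) \<le> c"
proof (rule field_le_epsilon)
  fix e :: real assume e: "e > 0"
  define d where "d = e/3"
  have d: "d > 0" using e by (simp add: d_def)
  obtain g where sg: "cstar g = g" and gg: "g*g = h + of_real d" using sqrt_pos[OF ph d] by blast
  obtain w where sw: "cstar w = w" and ww: "w*w = of_real c - h + of_real d" using sqrt_pos[OF pc d] by blast
  have "g*g + w*w = of_real (c + 2*d)" by (simp add: gg ww)
  hence "norm (g*g) \<le> c + 2*d" using unitary_bound[OF sg sw] c d by simp
  hence "norm (h + of_real d) \<le> c + 2*d" by (simp add: gg)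
  moreover have "norm h \<le> norm (h + of_real d) + d"
    using norm_triangle_ineq4[of "h + of_real d" "of_real d"] d by simp
  ultimately show "norm h \<le> c + e" by (simp add: d_def)
qed

lemma posc_mono:
  assumes "posc p" "posc (r::'a::comm_cstar_algebra_1)"
  shows "norm p \<le> norm (p + r)"
proof -
  have sk: "cstar (p + r) = p + r" using assms by (simp add: posc_def cstar_add)
  have "posc (of_real (norm (p+r)) - (p + r) + r)"
    by (rule posc_add[OF posc_const[OF sk] assms(2)]) simp
  hence "posc (of_real (norm (p+r)) - p)" by (simp add: algebra_simps)
  thus ?thesis using posc_le[OF assms(1)] by simp
qed



lemma hip_diff_left: "hip m (\<lambda>i. x i - y i) z = hip m x z - hip m y z"
  by (simp add: hip_def algebra_simps sum_subtractf)

lemma hip_diff_left': "hip m (x - y) z = hip m x z - hip m y z"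
  using hip_diff_left[of m x y z] by (simp add: fun_diff_def)

lemma hip_diff_right: "hip m x (y - z) = hip m x y - hip m x z"
  by (simp add: hip_def algebra_simps sum_subtractf)

lemma cstar_hip: "cstar (hip m x y) = hip m y x"
  by (simp add: hip_def cstar_sum cstar_mult cstar_cstar mult.commute)

theorem mainTheorem1:
  fixes \<tau> \<omega> :: "nat \<Rightarrow> nat \<Rightarrow> 'a::comm_cstar_algebra_1"
    and d n :: nat and \<epsilon> :: real
  assumes "parseval_frame d n \<tau>" and "parseval_frame d n \<omega>" and "\<epsilon> > 0"
    and "norm (\<Sum>j<n. hip d (\<tau> j - \<omega> j) (\<tau> j - \<omega> j)) < \<epsilon>"
  shows "norm (\<Sum>j<n. hip n (analysis_op d \<tau> (\<tau> j) - analysis_op d \<omega> (\<omega> j))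
                          (analysis_op d \<tau> (\<tau> j) - analysis_op d \<omega> (\<omega> j))) < 4 * \<epsilon>"
proof -
  define D where "D j = \<tau> j - \<omega> j" for j
  define A where "A j k = hip d (D j) (\<tau> k)" for j k
  define B where "B j k = hip d (\<omega> j) (D k)" for j k
  define E where "E = (\<Sum>j<n. hip d (D j) (D j))"
  define H where "H = (\<Sum>j<n. hip n (analysis_op d \<tau> (\<tau> j) - analysis_op d \<omega> (\<omega> j))
                          (analysis_op d \<tau> (\<tau> j) - analysis_op d \<omega> (\<omega> j)))"
  define G where "G = (\<Sum>j<n. \<Sum>k<n. (A j k - B j k) * cstar (A j k - B j k))"
  have pt: "\<And>x. hip d x x = (\<Sum>k<n. hip d x (\<tau> k) * hip d (\<tau> k) x)"
    using assms(1) by (simp add: parseval_frame_def)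
  have pw: "\<And>x. hip d x x = (\<Sum>k<n. hip d x (\<omega> k) * hip d (\<omega> k) x)"
    using assms(2) by (simp add: parseval_frame_def)
  have M: "(analysis_op d \<tau> (\<tau> j) - analysis_op d \<omega> (\<omega> j)) k = A j k + B j k" for j k
    by (simp add: analysis_op_def A_def B_def D_def hip_diff_left' hip_diff_right)
  have H': "H = (\<Sum>j<n. \<Sum>k<n. (A j k + B j k) * cstar (A j k + B j k))"
    unfolding H_def hip_def M ..
  have SA: "(\<Sum>j<n. \<Sum>k<n. A j k * cstar (A j k)) = E"
    unfolding E_def A_def cstar_hip by (simp add: pt)
  have "(\<Sum>j<n. \<Sum>k<n. B j k * cstar (B j k)) = (\<Sum>k<n. \<Sum>j<n. hip d (D k) (\<omega> j) * hip d (\<omega> j) (D k))"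
    unfolding B_def cstar_hip by (subst sum.swap) (simp add: mult.commute)
  also have "\<dots> = E" unfolding E_def by (simp add: pw)
  finally have SB: "(\<Sum>j<n. \<Sum>k<n. B j k * cstar (B j k)) = E" .
  have pe: "(a + b) * cstar (a + b) + (a - b) * cstar (a - b) = (a * cstar a + a * cstar a) + (b * cstar b + b * cstar b)"
    for a b :: 'a by (simp add: cstar_add algebra_simps)
  have "H + G = (\<Sum>j<n. \<Sum>k<n. (A j k * cstar (A j k) + A j k * cstar (A j k)) + (B j k * cstar (B j k) + B j k * cstar (B j k)))"
    unfolding H' G_def by (simp only: sum.distrib[symmetric] pe)
  also have "\<dots> = (E + E) + (E + E)"
    by (simp only: sum.distrib SA SB)
  finally have HG: "H + G = (E + E) + (E + E)" .
  have pH: "posc H" unfolding H' by (intro posc_sum posc_xx)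
  have pG: "posc G" unfolding G_def by (intro posc_sum posc_xx)
  have "norm H \<le> norm (H + G)" by (rule posc_mono[OF pH pG])
  also have "\<dots> \<le> 4 * norm E"
  proof -
    have 1: "norm (E+E) \<le> norm E + norm E" by (rule norm_triangle_ineq)
    have 2: "norm ((E+E)+(E+E)) \<le> norm (E+E) + norm (E+E)" by (rule norm_triangle_ineq)
    show ?thesis unfolding HG using 1 2 by linarith
  qed
  also have "\<dots> < 4 * \<epsilon>" using assms(4) by (simp add: E_def D_def)
  finally show ?thesis unfolding H_def .
qed


end
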